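(* For every $n\ge 4$, $$h_3(n,\{(4,0),(4,1),(4,3)\}) = \begin{cases} \dfrac{n}{2} & \text{if } n\equiv 0 \pmod 6,\\[2mm] \left\lceil \dfrac{n+1}{2}\right\rceil & \text{if } n\not\equiv 0 \pmod 6.\end{cases}$$
   Context: For an $r$-uniform hypergraph ($r$-graph) $H$, a homogeneous set is a set of vertices that is either a clique (every $r$-subset is an edge) or a coclique (no $r$-subset is an edge); $h(H)$ denotes the size of a largest homogeneous set. An $(m,f)$-graph is an $r$-graph with $m$ vertices and $f$ edges; $H$ is $(m,f)$-free if it contains no induced sub-hypergraph that is an $(m,f)$-graph. For a set $Q$ of pairs $(m,f)$, $H$ is $Q$-free if it is $(m,f)$-free for every $(m,f)\in Q$. $h_r(n,Q)$ is the minimum of $h(H)$ over all $n$-vertex $Q$-free $r$-graphs $H$. *)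

theory Defs
  imports Complex_Main
begin

definition uniform_hypergraph :: "nat \<Rightarrow> 'a set \<Rightarrow> 'a set set \<Rightarrow> bool" where
  "uniform_hypergraph r V E \<longleftrightarrow> finite V \<and> (\<forall>S\<in>E. S \<subseteq> V \<and> card S = r)"

definition homogeneous :: "nat \<Rightarrow> 'a set \<Rightarrow> 'a set set \<Rightarrow> 'a set \<Rightarrow> bool" where
  "homogeneous r V E X \<longleftrightarrow> X \<subseteq> V \<and>
     ((\<forall>S. S \<subseteq> X \<and> card S = r \<longrightarrow> S \<in> E) \<or> (\<forall>S. S \<subseteq> X \<and> card S = r \<longrightarrow> S \<notin> E))"

definition hom_number :: "nat \<Rightarrow> 'a set \<Rightarrow> 'a set set \<Rightarrow> nat" where
  "hom_number r V E = Max {card X | X. homogeneous r V E X}"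

definition mf_free :: "'a set \<Rightarrow> 'a set set \<Rightarrow> nat \<Rightarrow> nat \<Rightarrow> bool" where
  "mf_free V E m f \<longleftrightarrow> \<not> (\<exists>M. M \<subseteq> V \<and> card M = m \<and> card {S\<in>E. S \<subseteq> M} = f)"

definition Q_free :: "'a set \<Rightarrow> 'a set set \<Rightarrow> (nat \<times> nat) set \<Rightarrow> bool" where
  "Q_free V E Q \<longleftrightarrow> (\<forall>(m,f)\<in>Q. mf_free V E m f)"

text \<open>h_r(n,Q): minimum of h(H) over n-vertex Q-free r-graphs H. Every n-vertex
  r-graph is isomorphic to one on vertex set {0..<n}, so we range over those.\<close>
definition h_rnQ :: "nat \<Rightarrow> nat \<Rightarrow> (nat \<times> nat) set \<Rightarrow> nat" where
  "h_rnQ r n Q = Min {hom_number r {0..<n} E | E.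
      uniform_hypergraph r {0..<n} E \<and> Q_free {0..<n} E Q}"

end

theory Submission
  imports Defs
begin

lemma sub3_of4:
  assumes "S \<subseteq> {a,b,c,d}" "card S = 3" "a\<noteq>b" "a\<noteq>c" "a\<noteq>d" "b\<noteq>c" "b\<noteq>d" "c\<noteq>d"
  shows "S = {a,b,c} \<or> S = {a,b,d} \<or> S = {a,c,d} \<or> S = {b,c,d}"
proof -
  have f: "finite S" using assms(2) card.infinite by fastforce
  have c4: "card {a,b,c,d} = 4" using assms by simp
  have "card ({a,b,c,d} - S) = 1" using card_Diff_subset[OF f assms(1)] c4 assms(2) by simp
  then obtain x where x: "{a,b,c,d} - S = {x}" using card_1_singletonE by blast
  hence "S = {a,b,c,d} - {x}" using assms(1) by blast
  moreover have "x \<in> {a,b,c,d}" using x by blast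
  ultimately show ?thesis using assms by auto
qed

lemma cnt4:
  assumes uni: "\<forall>S\<in>E. card S = 3"
  and d: "a\<noteq>b" "a\<noteq>c" "a\<noteq>d" "b\<noteq>c" "b\<noteq>d" "c\<noteq>d"
  shows "card {S\<in>E. S \<subseteq> {a,b,c,d}} = of_bool ({a,b,c}\<in>E) + of_bool ({a,b,d}\<in>E) + of_bool ({a,c,d}\<in>E) + of_bool ({b,c,d}\<in>E)"
proof -
  let ?F = "{{a,b,c},{a,b,d},{a,c,d},{b,c,d}}"
  have eq: "{S\<in>E. S \<subseteq> {a,b,c,d}} = {T\<in>?F. T \<in> E}"
    using sub3_of4[OF _ _ d] uni by auto
  have "card {T\<in>?F. T \<in> E} = (\<Sum>T\<in>?F. if T \<in> E then 1 else 0)"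
    by (simp add: sum.inter_filter[symmetric])
  also have "\<dots> = of_bool ({a,b,c}\<in>E) + of_bool ({a,b,d}\<in>E) + of_bool ({a,c,d}\<in>E) + of_bool ({b,c,d}\<in>E)"
  proof -
    have n1: "{a,b,c} \<notin> {{a,b,d},{a,c,d},{b,c,d}}" using d by (auto simp: insert_eq_iff set_eq_iff) 
    have n2: "{a,b,d} \<notin> {{a,c,d},{b,c,d}}" using d by (auto simp: set_eq_iff) 
    have n3: "{a,c,d} \<notin> {{b,c,d}}" using d by (auto simp: set_eq_iff) 
    show ?thesis by (subst sum.insert, simp, fact n1, subst sum.insert, simp, fact n2, subst sum.insert, simp, fact n3) simp
  qed
  finally show ?thesis using eq by simp
qed

lemma hom_ge:
  assumes "finite V" "homogeneous r V E X"
  shows "card X \<le> hom_number r V E"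
proof -
  have "{card X | X. homogeneous r V E X} \<subseteq> card ` Pow V"
    by (auto simp: homogeneous_def)
  hence "finite {card X | X. homogeneous r V E X}"
    using assms(1) finite_subset by blast
  thus ?thesis unfolding hom_number_def using assms(2) by (intro Max_ge) auto
qed

locale qf =
  fixes V :: "nat set" and E :: "nat set set" and v :: nat
  assumes finV: "finite V" and uni: "\<And>S. S\<in>E \<Longrightarrow> S\<subseteq>V \<and> card S = 3"
  and fr: "\<And>M. M \<subseteq> V \<Longrightarrow> card M = 4 \<Longrightarrow> card {S\<in>E. S\<subseteq>M} \<notin> {0,1,3}"
  and vV: "v\<in>V"
begin

definition K where "K x y \<longleftrightarrow> x\<in>V \<and> y\<in>V \<and> x\<noteq>v \<and> y\<noteq>v \<and> x\<noteq>y \<and> {v,x,y}\<notin>E"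
definition W where "W = V - {v}"

lemma Ksym: "K x y \<longleftrightarrow> K y x" unfolding K_def by (auto simp: insert_commute)
lemma KsymD: "K x y \<Longrightarrow> K y x" unfolding K_def by (auto simp: insert_commute)
lemma Kirr: "\<not> K x x" unfolding K_def by auto
lemma KW: "K x y \<Longrightarrow> x\<in>W \<and> y\<in>W" unfolding K_def W_def by auto
lemma Kne: "K x y \<Longrightarrow> x \<noteq> y" unfolding K_def by auto

lemma cnt4': "a\<noteq>b \<Longrightarrow> a\<noteq>c \<Longrightarrow> a\<noteq>d \<Longrightarrow> b\<noteq>c \<Longrightarrow> b\<noteq>d \<Longrightarrow> c\<noteq>d \<Longrightarrow>
  card {S\<in>E. S \<subseteq> {a,b,c,d}} = of_bool ({a,b,c}\<in>E) + of_bool ({a,b,d}\<in>E) + of_bool ({a,c,d}\<in>E) + of_bool ({b,c,d}\<in>E)"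
  by (rule cnt4) (use uni in auto)

lemma four:
  assumes "a\<in>W" "b\<in>W" "c\<in>W" "a\<noteq>b" "a\<noteq>c" "b\<noteq>c"
  shows "of_bool(\<not>K a b)+of_bool(\<not>K a c)+of_bool(\<not>K b c)+of_bool({a,b,c}\<in>E) \<notin> {0,1,3::nat}"
proof -
  have vs: "v\<noteq>a" "v\<noteq>b" "v\<noteq>c" using assms unfolding W_def by auto
  have "card {S\<in>E. S\<subseteq>{v,a,b,c}} = of_bool({v,a,b}\<in>E)+of_bool({v,a,c}\<in>E)+of_bool({v,b,c}\<in>E)+of_bool({a,b,c}\<in>E)"
    using vs assms by (intro cnt4') auto
  moreover have "card {S\<in>E. S\<subseteq>{v,a,b,c}} \<notin> {0,1,3}"
    using assms vs vV by (intro fr) (auto simp: W_def)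
  moreover have "({v,a,b}\<in>E) = (\<not>K a b)" "({v,a,c}\<in>E) = (\<not>K a c)" "({v,b,c}\<in>E) = (\<not>K b c)"
    using assms unfolding K_def W_def by auto
  ultimately show ?thesis by simp
qed

lemma tri: "K a b \<Longrightarrow> K a c \<Longrightarrow> K b c \<Longrightarrow> False"
  using four[of a b c] KW Kne by fastforce

lemma cn: "K x w \<Longrightarrow> K y w \<Longrightarrow> \<not> K x y"
  using tri Ksym by blast

lemma F23:
  assumes "a\<in>W" "b\<in>W" "c\<in>W" "a\<noteq>b" "a\<noteq>c" "b\<noteq>c"
   and "\<not>((K a b \<and> \<not>K a c \<and> \<not>K b c) \<or> (\<not>K a b \<and> K a c \<and> \<not>K b c) \<or> (\<not>K a b \<and> \<not>K a c \<and> K b c))"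
  shows "{a,b,c}\<in>E"
  using four[OF assms(1-6)] assms(7) tri by (cases "K a b"; cases "K a c"; cases "K b c") auto

lemma F4:
  assumes "a\<in>W" "b\<in>W" "c\<in>W" "a\<noteq>b" "a\<noteq>c" "b\<noteq>c"
   and "K a b" "\<not>K a c" "\<not>K b c"
  shows "{a,b,c}\<notin>E"
  using four[OF assms(1-6)] assms(7-9) by auto

lemma twoK2:
  assumes "K a b" "K c d" "a\<noteq>c" "a\<noteq>d" "b\<noteq>c" "b\<noteq>d"
  shows "K a c \<or> K a d \<or> K b c \<or> K b d"
proof (rule ccontr)
  assume n: "\<not> ?thesis"
  have ab: "a\<noteq>b" "c\<noteq>d" using assms Kne by auto
  have W: "a\<in>W" "b\<in>W" "c\<in>W" "d\<in>W" using assms KW by auto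
  have "{a,b,c}\<notin>E" using F4[of a b c] W assms ab n by auto
  moreover have "{a,b,d}\<notin>E" using F4[of a b d] W assms ab n by auto
  moreover have "{a,c,d}\<notin>E" using F4[of c d a] W assms ab n Ksym by (auto simp: insert_commute)
  moreover have "{b,c,d}\<notin>E" using F4[of c d b] W assms ab n Ksym by (auto simp: insert_commute)
  ultimately have "card {S\<in>E. S\<subseteq>{a,b,c,d}} = 0" using cnt4'[of a b c d] assms ab by simp
  moreover have "card {S\<in>E. S\<subseteq>{a,b,c,d}} \<notin> {0,1,3}"
    using W assms ab by (intro fr) (auto simp: W_def)
  ultimately show False by simp
qed

lemma cliqW:
  assumes "S \<subseteq> W"
  and "\<And>a b c. a\<in>S \<Longrightarrow> b\<in>S \<Longrightarrow> c\<in>S \<Longrightarrow> a\<noteq>b \<Longrightarrow> a\<noteq>c \<Longrightarrow> b\<noteq>c \<Longrightarrow>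
     \<not>((K a b \<and> \<not>K a c \<and> \<not>K b c) \<or> (\<not>K a b \<and> K a c \<and> \<not>K b c) \<or> (\<not>K a b \<and> \<not>K a c \<and> K b c))"
  shows "homogeneous 3 V E S"
  unfolding homogeneous_def
proof (intro conjI disjI1 allI impI)
  show "S \<subseteq> V" using assms(1) by (auto simp: W_def)
  fix T assume "T \<subseteq> S \<and> card T = 3"
  then obtain a b c where "T = {a,b,c}" "a\<noteq>b" "b\<noteq>c" "a\<noteq>c" "a\<in>S" "b\<in>S" "c\<in>S"
    by (auto simp: card_3_iff)
  thus "T \<in> E" using F23[of a b c] assms by auto
qed

lemma cliqV:
  assumes "S \<subseteq> W" and "\<And>a b. a\<in>S \<Longrightarrow> b\<in>S \<Longrightarrow> \<not>K a b"
  shows "homogeneous 3 V E (insert v S)"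
  unfolding homogeneous_def
proof (intro conjI disjI1 allI impI)
  show "insert v S \<subseteq> V" using assms(1) vV by (auto simp: W_def)
  fix T assume "T \<subseteq> insert v S \<and> card T = 3"
  then obtain a b c where T: "T = {a,b,c}" "a\<noteq>b" "b\<noteq>c" "a\<noteq>c" "a\<in>insert v S" "b\<in>insert v S" "c\<in>insert v S"
    by (auto simp: card_3_iff)
  have vW: "v \<notin> W" by (simp add: W_def)
  have SV: "S \<subseteq> V" "\<And>x. x\<in>S \<Longrightarrow> x\<noteq>v" using assms(1) vW by (auto simp: W_def)
  show "T \<in> E"
  proof (cases "v \<in> T")
    case False
    thus ?thesis using T F23[of a b c] assms by auto
  next
    case True
    then consider "a = v" | "b = v" | "c = v" using T by auto
    thus ?thesis
    proof cases
      case 1 thus ?thesis using T assms(2)[of b c] SV by (auto simp: K_def)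
    next
      case 2 thus ?thesis using T assms(2)[of a c] SV by (auto simp: K_def insert_commute)
    next
      case 3 thus ?thesis using T assms(2)[of a b] SV by (auto simp: K_def insert_commute)
    qed
  qed
qed


definition nb where "nb x = {y. K x y}"
lemma nb_sub: "nb x \<subseteq> W" unfolding nb_def using KW by auto
lemma finW: "finite W" unfolding W_def using finV by auto
lemma cardW: "card W = card V - 1" unfolding W_def using finV vV by auto

definition C5 where "C5 a b c d e \<longleftrightarrow> K a b \<and> K b c \<and> K c d \<and> K d e \<and> K e a \<and>
   \<not>K a c \<and> \<not>K a d \<and> \<not>K b d \<and> \<not>K b e \<and> \<not>K c e"

lemma caseA:
  assumes "W \<noteq> {}" "\<not>(\<exists>a b c d e. C5 a b c d e)"
  shows "\<exists>X. homogeneous 3 V E X \<and> card V + 1 \<le> 2 * card X"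
proof -
  define f where "f x = card (nb x)" for x
  have fin: "finite (f ` W)" using finW by auto
  have "Max (f ` W) \<in> f ` W" using Max_in[OF fin] assms(1) by auto
  then obtain u where u: "u \<in> W" "f u = Max (f ` W)" by (metis imageE)
  have umax: "\<And>x. x\<in>W \<Longrightarrow> f x \<le> f u" using u fin by auto
  define N where "N = nb u"
  define M where "M = W - N"
  have NW: "N \<subseteq> W" unfolding N_def by (rule nb_sub)
  have indN: "\<And>a b. a\<in>N \<Longrightarrow> b\<in>N \<Longrightarrow> \<not>K a b" unfolding N_def nb_def using cn Ksym by blast
  have indM: "\<And>x y. x\<in>M \<Longrightarrow> y\<in>M \<Longrightarrow> \<not>K x y"
  proof
    fix x y assume xM: "x\<in>M" and yM: "y\<in>M" and xy: "K x y"
    have nx: "\<not>K u x" "\<not>K u y" using xM yM unfolding M_def N_def nb_def by auto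
    have xu: "x\<noteq>u" "y\<noteq>u" using xy nx Ksym by auto
    have "(\<forall>w. K u w \<longrightarrow> K x w) \<or> (\<forall>w. K u w \<longrightarrow> K y w)"
    proof (rule ccontr)
      assume "\<not> ?thesis"
      then obtain w1 w2 where w: "K u w1" "\<not>K x w1" "K u w2" "\<not>K y w2" by blast
      have d1: "w1 \<noteq> x" "w1 \<noteq> y" "w2\<noteq>x" "w2\<noteq>y" using w nx by auto
      have "K u x \<or> K u y \<or> K w1 x \<or> K w1 y" using twoK2[OF w(1) xy] xu d1 by auto
      hence k1: "K w1 y" using nx w Ksym by auto
      have "K u y \<or> K u x \<or> K w2 y \<or> K w2 x" using twoK2[OF w(3), of y x] xy Ksym xu d1 by auto
      hence k2: "K w2 x" using nx w Ksym by auto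
      have "C5 u w1 y x w2" unfolding C5_def using w k1 k2 nx xy cn Ksym by meson
      thus False using assms(2) by blast
    qed
    moreover have "\<And>x y. x\<in>W \<Longrightarrow> K x y \<Longrightarrow> \<not>K u y \<Longrightarrow> \<forall>w. K u w \<longrightarrow> K x w \<Longrightarrow> False"
    proof -
      fix x y assume "x\<in>W" "K x y" "\<not>K u y" "\<forall>w. K u w \<longrightarrow> K x w"
      hence "insert y (nb u) \<subseteq> nb x" "y \<notin> nb u" unfolding nb_def by auto
      moreover have fx: "\<And>z. finite (nb z)" using finite_subset[OF nb_sub finW] .
      ultimately have "card (insert y (nb u)) \<le> card (nb x)" "card (insert y (nb u)) = Suc (f u)"
        unfolding f_def by (metis card_mono) (simp add: fx \<open>y \<notin> nb u\<close>)
      thus False using umax[OF \<open>x\<in>W\<close>] unfolding f_def by simp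
    qed
    ultimately show False using xy nx KW Ksym by metis
  qed
  have cNM: "card N + card M = card W" unfolding M_def using NW finW
    by (metis card_Diff_subset card_mono diff_add_inverse le_add_diff_inverse finite_subset)
  have vN: "v \<notin> N" "v \<notin> M" using NW unfolding M_def W_def by auto
  have fN: "finite N" "finite M" using NW finW unfolding M_def by (auto intro: finite_subset)
  have h1: "homogeneous 3 V E (insert v N)" by (rule cliqV[OF NW indN])
  have h2: "homogeneous 3 V E (insert v M)" by (rule cliqV) (use indM in \<open>auto simp: M_def\<close>)
  have c1: "card (insert v N) = Suc (card N)" "card (insert v M) = Suc (card M)" using vN fN by auto
  have "card V \<ge> 1" using vV finV by (metis One_nat_def Suc_leI card_gt_0_iff empty_iff)
  hence "card V + 1 \<le> 2 * card (insert v N) \<or> card V + 1 \<le> 2 * card (insert v M)"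
    using c1 cNM cardW by linarith
  thus ?thesis using h1 h2 by blast
qed


end


definition bnd :: "nat \<Rightarrow> nat" where "bnd n = (if n mod 6 = 0 then n div 2 else n div 2 + 1)"

lemma arith10:
  fixes n i a b c d e H :: nat
  assumes "n \<le> 1 + i + a + b + c + d + e"
  "1+i+a+c \<le> H" "1+i+b+d \<le> H" "1+i+c+e \<le> H" "1+i+d+a \<le> H" "1+i+e+b \<le> H"
  "a+b+c \<le> H" "b+c+d \<le> H" "c+d+e \<le> H" "d+e+a \<le> H" "e+a+b \<le> H"
  shows "bnd n \<le> H"
proof -
  have h: "n \<le> 2 * H" using assms by linarith
  show ?thesis
  proof (cases "n div 2 + 1 \<le> H")
    case True thus ?thesis unfolding bnd_def by auto
  next
    case False
    hence "2 * H \<le> n" by linarith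
    hence eq: "2*H = n" using h by linarith
    hence "a = b \<and> b = c \<and> c = d \<and> d = e \<and> 1 + i = a" using assms by linarith
    hence "n mod 6 = 0" using eq assms by presburger
    thus ?thesis unfolding bnd_def using eq by simp
  qed
qed
context qf begin
lemma C5rot: "C5 a b c d e \<Longrightarrow> C5 b c d e a" unfolding C5_def by (simp add: Ksym)

definition Acl where "Acl p q = {x. K x p \<and> K x q}"
definition Iset where "Iset a b c d e = {x\<in>W. \<not>K x a \<and> \<not>K x b \<and> \<not>K x c \<and> \<not>K x d \<and> \<not>K x e}"

lemma Irot: "Iset b c d e a = Iset a b c d e" unfolding Iset_def by auto
lemma AclW: "Acl p q \<subseteq> W" unfolding Acl_def using KW by auto
lemma IW: "Iset a b c d e \<subseteq> W" unfolding Iset_def by auto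

lemma compl: assumes "C5 a b c d e" "x \<in> Acl e b" "y \<in> Acl a c" shows "K x y"
proof -
  have k: "K x e" "K x b" "K y a" "K y c" using assms unfolding Acl_def by auto
  have c: "K a b" "K b c" "K c d" "K d e" "K e a" "\<not>K a c" "\<not>K a d" "\<not>K b d" "\<not>K b e" "\<not>K c e"
    using assms(1) unfolding C5_def by auto
  have d: "x\<noteq>y" using k c tri Ksym by metis
  have d2: "x\<noteq>c" "e\<noteq>y" "x \<noteq> e" "y \<noteq> c" "e\<noteq>c" using k c Kirr Ksym by metis+
  have "K x y \<or> K x c \<or> K e y \<or> K e c" using twoK2[OF k(1) k(4)] d d2 Ksym by (metis)
  moreover have "\<not>K x c" using k c tri by blast
  moreover have "\<not>K e y" using k c tri Ksym by metis
  ultimately show ?thesis using c Ksym by metis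
qed

lemma disjAdj: "C5 a b c d e \<Longrightarrow> Acl e b \<inter> Acl a c = {}"
  unfolding Acl_def C5_def using tri KsymD by blast
lemma disj2: "C5 a b c d e \<Longrightarrow> Acl e b \<inter> Acl b d = {}"
  unfolding Acl_def C5_def using tri KsymD by blast
lemma disjI: "Iset a b c d e \<inter> Acl p b = {}" "Iset a b c d e \<inter> Acl p d = {}"
  unfolding Acl_def Iset_def using Ksym by auto

lemma indT1:
  assumes "C5 a b c d e" "x \<in> Iset a b c d e \<union> Acl e b \<union> Acl b d" "y \<in> Iset a b c d e \<union> Acl e b \<union> Acl b d"
  shows "\<not> K x y"
proof
  assume xy: "K x y"
  have c: "K a b" "K b c" "K c d" "K d e" "K e a" "\<not>K a c" "\<not>K a d" "\<not>K b d" "\<not>K b e" "\<not>K c e"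
    using assms(1) unfolding C5_def by auto
  have IA: False if "p \<in> Iset a b c d e" "q \<in> Acl e b \<union> Acl b d" "K p q" for p q
  proof -
    have p: "\<not>K p a" "\<not>K p b" "\<not>K p c" "\<not>K p d" "\<not>K p e" using that(1) unfolding Iset_def by auto
    have pq: "p \<noteq> q" using that(3) Kne by auto
    show False using that(2)
    proof
      assume q: "q \<in> Acl e b"
      hence qk: "K q e" "K q b" unfolding Acl_def by auto
      have "p\<noteq>c" "p\<noteq>d" "q\<noteq>c" "q\<noteq>d" using p c qk Ksym by metis+
      hence "K p c \<or> K p d \<or> K q c \<or> K q d" using twoK2[OF that(3) c(3)] pq by blast
      thus False using p qk c tri Ksym by metis
    next
      assume q: "q \<in> Acl b d"
      hence qk: "K q b" "K q d" unfolding Acl_def by auto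
      have "p\<noteq>e" "p\<noteq>a" "q\<noteq>e" "q\<noteq>a" using p c qk Ksym by metis+
      hence "K p e \<or> K p a \<or> K q e \<or> K q a" using twoK2[OF that(3) c(5)] pq by blast
      thus False using p qk c tri Ksym by metis
    qed
  qed
  show False
  proof (cases "x \<in> Iset a b c d e")
    case xI: True
    show False
    proof (cases "y \<in> Iset a b c d e")
      case True
      have p: "\<not>K x a" "\<not>K x b" "\<not>K y a" "\<not>K y b" using xI True unfolding Iset_def by auto
      have "x\<noteq>a" "x\<noteq>b" "y\<noteq>a" "y\<noteq>b" using p c Ksym by metis+
      hence "K x a \<or> K x b \<or> K y a \<or> K y b" using twoK2[OF xy c(1)] by blast
      thus False using p by blast
    next
      case False thus False using IA[OF xI _ xy] assms(3) by blast
    qed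
  next
    case False
    hence xA: "x \<in> Acl e b \<union> Acl b d" using assms(2) by blast
    show False
    proof (cases "y \<in> Iset a b c d e")
      case True thus False using IA[OF True xA] xy KsymD by blast
    next
      case False
      hence "y \<in> Acl e b \<union> Acl b d" using assms(3) by blast
      hence "K x b" "K y b" using xA unfolding Acl_def by auto
      thus False using cn xy by blast
    qed
  qed
qed

lemma cov1: assumes "C5 a b c d e" "x \<in> W" "K x a" shows "x \<in> Acl a c \<union> Acl d a"
proof -
  have c: "K a b" "K b c" "K c d" "K d e" "K e a" "\<not>K a c" "\<not>K a d" "\<not>K b d" "\<not>K b e" "\<not>K c e"
    using assms(1) unfolding C5_def by auto
  have "x\<noteq>c" "x\<noteq>d" "a\<noteq>c" "a\<noteq>d" using assms(3) c Ksym by metis+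
  hence "K x c \<or> K x d \<or> K a c \<or> K a d" using twoK2[OF assms(3) c(3)] by blast
  thus ?thesis unfolding Acl_def using assms(3) c Ksym by auto
qed

lemma block:
  assumes "C5 a b c d e"
  shows "1 + card (Iset a b c d e) + card (Acl e b) + card (Acl b d) \<le> hom_number 3 V E"
    and "card (Acl e b) + card (Acl a c) + card (Acl b d) \<le> hom_number 3 V E"
proof -
  let ?I = "Iset a b c d e"
  have fin: "finite (Acl p q)" "finite ?I" for p q using finite_subset[OF AclW finW] finite_subset[OF IW finW] by auto
  have S1: "?I \<union> Acl e b \<union> Acl b d \<subseteq> W" using AclW IW by auto
  have "homogeneous 3 V E (insert v (?I \<union> Acl e b \<union> Acl b d))"
    by (rule cliqV[OF S1]) (rule indT1[OF assms], auto)
  hence "card (insert v (?I \<union> Acl e b \<union> Acl b d)) \<le> hom_number 3 V E" by (rule hom_ge[OF finV])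
  moreover have "v \<notin> ?I \<union> Acl e b \<union> Acl b d" using S1 by (auto simp: W_def)
  moreover have "card (?I \<union> Acl e b \<union> Acl b d) = card ?I + card (Acl e b) + card (Acl b d)"
    using fin disjI[of a b c d e] disj2[OF assms] by (simp add: card_Un_disjoint Int_Un_distrib Int_Un_distrib2)
  ultimately show "1 + card ?I + card (Acl e b) + card (Acl b d) \<le> hom_number 3 V E"
    using fin by simp
  let ?T = "Acl e b \<union> Acl a c \<union> Acl b d"
  have S2: "?T \<subseteq> W" using AclW by auto
  have a2: "C5 b c d e a" using C5rot[OF assms] .
  have iff: "K p q \<longleftrightarrow> ((p \<in> Acl a c) \<noteq> (q \<in> Acl a c))" if "p \<in> ?T" "q \<in> ?T" for p q
  proof (cases "p \<in> Acl a c"; cases "q \<in> Acl a c")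
    assume h: "p \<in> Acl a c" "q \<in> Acl a c"
    hence "K p a" "K q a" unfolding Acl_def by auto
    hence "\<not> K p q" by (rule cn)
    thus ?thesis using h by simp
  next
    assume h: "p \<notin> Acl a c" "q \<notin> Acl a c"
    hence "K p b" "K q b" using that unfolding Acl_def by auto
    hence "\<not> K p q" by (rule cn)
    thus ?thesis using h by simp
  next
    assume h: "p \<in> Acl a c" "q \<notin> Acl a c"
    hence "q \<in> Acl e b \<or> q \<in> Acl b d" using that by auto
    hence "K p q"
    proof
      assume "q \<in> Acl e b" thus "K p q" using compl[OF assms _ h(1)] KsymD by blast
    next
      assume "q \<in> Acl b d" thus "K p q" using compl[OF a2 h(1)] by blast
    qed
    thus ?thesis using h by simp
  next
    assume h: "p \<notin> Acl a c" "q \<in> Acl a c"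
    hence "p \<in> Acl e b \<or> p \<in> Acl b d" using that by auto
    hence "K p q"
    proof
      assume "p \<in> Acl e b" thus "K p q" using compl[OF assms _ h(2)] by blast
    next
      assume "p \<in> Acl b d" thus "K p q" using compl[OF a2 h(2)] KsymD by blast
    qed
    thus ?thesis using h by simp
  qed
  have "homogeneous 3 V E ?T"
  proof (rule cliqW[OF S2])
    fix p q r assume h: "p \<in> ?T" "q \<in> ?T" "r \<in> ?T"
    show "\<not>((K p q \<and> \<not>K p r \<and> \<not>K q r) \<or> (\<not>K p q \<and> K p r \<and> \<not>K q r) \<or> (\<not>K p q \<and> \<not>K p r \<and> K q r))"
      unfolding iff[OF h(1) h(2)] iff[OF h(1) h(3)] iff[OF h(2) h(3)] by blast
  qed
  hence "card ?T \<le> hom_number 3 V E" by (rule hom_ge[OF finV])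
  moreover have "card ?T = card (Acl e b) + card (Acl a c) + card (Acl b d)"
    using fin disjAdj[OF assms] disjAdj[OF a2] disj2[OF assms]
    by (simp add: card_Un_disjoint Int_Un_distrib Int_Un_distrib2)
  ultimately show "card (Acl e b) + card (Acl a c) + card (Acl b d) \<le> hom_number 3 V E" by simp
qed


lemma caseB:
  assumes r0: "C5 a b c d e"
  shows "bnd (card V) \<le> hom_number 3 V E"
proof -
  have r1: "C5 b c d e a" using C5rot[OF r0] .
  have r2: "C5 c d e a b" using C5rot[OF r1] .
  have r3: "C5 d e a b c" using C5rot[OF r2] .
  have r4: "C5 e a b c d" using C5rot[OF r3] .
  let ?I = "Iset a b c d e"
  have I: "Iset b c d e a = ?I" "Iset c d e a b = ?I" "Iset d e a b c = ?I" "Iset e a b c d = ?I"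
    by (simp_all add: Irot)
  note b0 = block[OF r0] and b1 = block[OF r1, unfolded I] and b2 = block[OF r2, unfolded I]
    and b3 = block[OF r3, unfolded I] and b4 = block[OF r4, unfolded I]
  have cov: "W \<subseteq> ?I \<union> Acl e b \<union> Acl a c \<union> Acl b d \<union> Acl c e \<union> Acl d a"
  proof
    fix x assume x: "x \<in> W"
    show "x \<in> ?I \<union> Acl e b \<union> Acl a c \<union> Acl b d \<union> Acl c e \<union> Acl d a"
    proof (cases "K x a \<or> K x b \<or> K x c \<or> K x d \<or> K x e")
      case False thus ?thesis using x unfolding Iset_def by auto
    next
      case True
      then consider "K x a" | "K x b" | "K x c" | "K x d" | "K x e" by blast
      thus ?thesis
      proof cases
        case 1 thus ?thesis using cov1[OF r0 x] by blast
      next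
        case 2 thus ?thesis using cov1[OF r1 x] by blast
      next
        case 3 thus ?thesis using cov1[OF r2 x] by blast
      next
        case 4 thus ?thesis using cov1[OF r3 x] by blast
      next
        case 5 thus ?thesis using cov1[OF r4 x] by blast
      qed
    qed
  qed
  have fin: "finite (Acl p q)" "finite ?I" for p q using finite_subset[OF AclW finW] finite_subset[OF IW finW] by auto
  have "card W \<le> card (?I \<union> Acl e b \<union> Acl a c \<union> Acl b d \<union> Acl c e \<union> Acl d a)"
    using cov fin by (intro card_mono) auto
  also have "\<dots> \<le> card ?I + card (Acl e b) + card (Acl a c) + card (Acl b d) + card (Acl c e) + card (Acl d a)"
    by (intro order.trans[OF card_Un_le] add_mono order_refl)+
  finally have "card V \<le> 1 + card ?I + card (Acl e b) + card (Acl a c) + card (Acl b d) + card (Acl c e) + card (Acl d a)"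
    using cardW by linarith
  thus ?thesis by (rule arith10[OF _ b0(1) b1(1) b2(1) b3(1) b4(1) b0(2) b1(2) b2(2) b3(2) b4(2)])
qed

lemma lower:
  assumes "card V \<ge> 4"
  shows "bnd (card V) \<le> hom_number 3 V E"
proof (cases "\<exists>a b c d e. C5 a b c d e")
  case True thus ?thesis using caseB by blast
next
  case False
  have "W \<noteq> {}" using assms cardW by auto
  then obtain X where X: "homogeneous 3 V E X" "card V + 1 \<le> 2 * card X" using caseA False by blast
  have "bnd (card V) \<le> card X" using X(2) unfolding bnd_def by auto
  also have "\<dots> \<le> hom_number 3 V E" by (rule hom_ge[OF finV X(1)])
  finally show ?thesis .
qed

end


definition t6 :: "nat \<Rightarrow> nat \<Rightarrow> nat \<Rightarrow> bool" where
  "t6 p q r \<longleftrightarrow> (2::nat)^p + 2^q + 2^r \<in> {11,21,41,19,37,14,28,56,50,38}"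
definition ok3 :: "nat \<Rightarrow> nat \<Rightarrow> nat \<Rightarrow> bool" where
  "ok3 p q r \<longleftrightarrow> p = q \<or> p = r \<or> q = r \<or> t6 p q r"

lemma lt6: "(p::nat) < 6 \<longleftrightarrow> p=0\<or>p=1\<or>p=2\<or>p=3\<or>p=4\<or>p=5" by arith
lemma all6: "(\<forall>p<(6::nat). P p) \<longleftrightarrow> P 0 \<and> P 1 \<and> P 2 \<and> P 3 \<and> P 4 \<and> P 5"
  unfolding lt6 by blast

lemma FB0: "\<forall>q<6. \<forall>r<6. \<forall>s<6. 0\<noteq>q \<and> 0\<noteq>r \<and> 0\<noteq>s \<and> q\<noteq>r \<and> q\<noteq>s \<and> r\<noteq>s \<longrightarrow>
   \<not>(t6 0 q r \<and> t6 0 q s \<and> t6 0 r s \<and> t6 q r s)"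
  unfolding all6 t6_def by simp
lemma FB: "\<forall>p<6. \<forall>q<6. \<forall>r<6. \<forall>s<6. p\<noteq>q \<and> p\<noteq>r \<and> p\<noteq>s \<and> q\<noteq>r \<and> q\<noteq>s \<and> r\<noteq>s \<longrightarrow>
   \<not>(t6 p q r \<and> t6 p q s \<and> t6 p r s \<and> t6 q r s)"
  unfolding all6 t6_def by simp
lemma FA: "\<forall>p<6. \<forall>q<6. \<forall>r<6. \<forall>s<6.
   (of_bool(ok3 p q r) + of_bool(ok3 p q s) + of_bool(ok3 p r s) + of_bool(ok3 q r s) :: nat) \<notin> {0,1,3}"
  unfolding all6 t6_def ok3_def by simp

definition codes :: "nat set" where "codes = {11,21,41,19,37,14,28,56,50,38}"
definition okS :: "nat set \<Rightarrow> bool" where "okS T \<longleftrightarrow> card T \<le> 2 \<or> (\<Sum>j\<in>T. (2::nat)^j) \<in> codes"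
definition Econ :: "nat \<Rightarrow> nat set set" where
  "Econ n = {S. S \<subseteq> {0..<n} \<and> card S = 3 \<and> okS ((\<lambda>x. x mod 6) ` S)}"

lemma okS3: "okS {p,q,r} \<longleftrightarrow> ok3 p q r"
proof (cases "p = q \<or> p = r \<or> q = r")
  case True
  hence "card {p,q,r} \<le> 2" by (auto simp: card_insert_if)
  thus ?thesis using True unfolding okS_def ok3_def by auto
next
  case False
  thus ?thesis unfolding okS_def ok3_def t6_def codes_def by (auto simp: add.assoc)
qed

lemma memE:
  assumes "a<n" "b<n" "c<n" "a\<noteq>b" "a\<noteq>c" "b\<noteq>c"
  shows "{a,b,c} \<in> Econ n \<longleftrightarrow> ok3 (a mod 6) (b mod 6) (c mod 6)"
  using assms unfolding Econ_def by (simp add: okS3[symmetric])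

lemma card4E: assumes "card M = 4"
  obtains a b c d where "M = {a,b,c,d}" "a\<noteq>b" "a\<noteq>c" "a\<noteq>d" "b\<noteq>c" "b\<noteq>d" "c\<noteq>d"
proof -
  from assms obtain a B where "M = insert a B" "a \<notin> B" "card B = 3"
    using card_Suc_eq[of M 3] by (auto simp: numeral_eq_Suc)
  moreover then obtain b c d where "B = {b,c,d}" "b\<noteq>c" "c\<noteq>d" "b\<noteq>d" by (auto simp: card_3_iff)
  ultimately show ?thesis using that by auto
qed

lemma classcard: "card {x. x < n \<and> x mod 6 = j} = n div 6 + of_bool (j < n mod 6)" if "j < 6"
proof (induction n)
  case 0 thus ?case by simp
next
  case (Suc n)
  have eq: "{x. x < Suc n \<and> x mod 6 = j} = {x. x < n \<and> x mod 6 = j} \<union> (if n mod 6 = j then {n} else {})"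
    by (auto simp: less_Suc_eq)
  have "card {x. x < Suc n \<and> x mod 6 = j} = card {x. x < n \<and> x mod 6 = j} + of_bool (n mod 6 = j)"
    unfolding eq by (auto simp: card_Un_disjoint)
  also have "\<dots> = Suc n div 6 + of_bool (j < Suc n mod 6)"
  proof (cases "n mod 6 = 5")
    case True
    hence "Suc n mod 6 = 0" "Suc n div 6 = n div 6 + 1" by (simp_all add: mod_Suc div_Suc)
    thus ?thesis using Suc True that by auto
  next
    case False
    have "n mod 6 < 6" by simp
    hence "Suc n mod 6 = Suc (n mod 6)" "Suc n div 6 = n div 6" using False by (simp_all add: mod_Suc div_Suc)
    thus ?thesis using Suc by auto
  qed
  finally show ?case .
qed

lemma Qfree_iff: "Q_free V E {(4,0),(4,1),(4,3)} \<longleftrightarrow> (\<forall>M. M \<subseteq> V \<and> card M = 4 \<longrightarrow> card {S\<in>E. S\<subseteq>M} \<notin> {0,1,3})"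
  unfolding Q_free_def mf_free_def by auto

lemma Econ_uniform: "uniform_hypergraph 3 {0..<n} (Econ n)"
  unfolding uniform_hypergraph_def Econ_def by auto

lemma Econ_free: "Q_free {0..<n} (Econ n) {(4,0),(4,1),(4,3)}"
  unfolding Qfree_iff
proof (intro allI impI)
  fix M assume M: "M \<subseteq> {0..<n} \<and> card M = 4"
  then obtain a b c d where abcd: "M = {a,b,c,d}" "a\<noteq>b" "a\<noteq>c" "a\<noteq>d" "b\<noteq>c" "b\<noteq>d" "c\<noteq>d"
    using card4E by blast
  have lt: "a<n" "b<n" "c<n" "d<n" using M abcd by auto
  have "card {S\<in>Econ n. S\<subseteq>M} = of_bool ({a,b,c}\<in>Econ n) + of_bool ({a,b,d}\<in>Econ n) + of_bool ({a,c,d}\<in>Econ n) + of_bool ({b,c,d}\<in>Econ n)"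
    unfolding abcd(1) by (rule cnt4) (use abcd in \<open>auto simp: Econ_def\<close>)
  also have "\<dots> = of_bool(ok3 (a mod 6) (b mod 6) (c mod 6)) + of_bool(ok3 (a mod 6) (b mod 6) (d mod 6)) + of_bool(ok3 (a mod 6) (c mod 6) (d mod 6)) + of_bool(ok3 (b mod 6) (c mod 6) (d mod 6))"
    using lt abcd by (simp add: memE)
  finally show "card {S\<in>Econ n. S\<subseteq>M} \<notin> {0,1,3}" using FA by simp
qed


lemma bnd_alt: "bnd n = (if n mod 6 = 0 then 3 * (n div 6) else 3 * (n div 6) + (n mod 6) div 2 + 1)"
proof -
  have e: "n = n mod 6 + 2 * (3 * (n div 6))" by simp
  have "n div 2 = (n mod 6 + 2 * (3 * (n div 6))) div 2" using e by simp
  also have "\<dots> = 3 * (n div 6) + (n mod 6) div 2" by (metis div_mult_self2 zero_neq_numeral)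
  finally show ?thesis unfolding bnd_def by simp
qed
lemma arithB: fixes n x c k :: nat
  assumes "x \<le> c*(n div 6) + k" "c \<le> 3" "k \<le> c" "k \<le> n mod 6" "c = 3 \<and> n mod 6 = 3 \<longrightarrow> k \<le> 2"
  shows "x \<le> bnd n"
proof -
  have "n mod 6 < 6" by simp
  hence r: "n mod 6 = 0 \<or> n mod 6 = 1 \<or> n mod 6 = 2 \<or> n mod 6 = 3 \<or> n mod 6 = 4 \<or> n mod 6 = 5" unfolding lt6 .
  have c: "c = 0 \<or> c = 1 \<or> c = 2 \<or> c = 3" using assms(2) by arith
  show ?thesis unfolding bnd_alt using r c assms
    by (elim disjE) (simp_all, linarith?)
qed

lemma lt3: "(p::nat) < 3 \<longleftrightarrow> p=0\<or>p=1\<or>p=2" by arith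
lemma no012: "p < 3 \<Longrightarrow> q < 3 \<Longrightarrow> r < 3 \<Longrightarrow> p\<noteq>q \<Longrightarrow> p\<noteq>r \<Longrightarrow> q\<noteq>r \<Longrightarrow> \<not> t6 p q r"
  unfolding lt3 t6_def by auto

lemma cocl:
  assumes fr: "\<forall>M. M \<subseteq> V \<and> card M = 4 \<longrightarrow> card {S\<in>E. S\<subseteq>M} \<notin> {0,1,3}"
  and uni: "\<forall>S\<in>E. card S = 3" and X: "X \<subseteq> V" "finite X" "\<forall>S. S\<subseteq>X \<and> card S = 3 \<longrightarrow> S \<notin> E"
  shows "card X \<le> 3"
proof (rule ccontr)
  assume "\<not> card X \<le> 3"
  then obtain M where M: "M \<subseteq> X" "card M = 4" using obtain_subset_with_card_n[of 4 X] by auto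
  have e: "{S\<in>E. S\<subseteq>M} = {}" using M X uni by auto
  have "card {S\<in>E. S\<subseteq>M} \<notin> {0,1,3}" using fr M X by auto
  thus False unfolding e by simp
qed

lemma hom_le:
  assumes "finite V" "\<And>X. homogeneous r V E X \<Longrightarrow> card X \<le> m"
  shows "hom_number r V E \<le> m"
proof -
  have "{card X | X. homogeneous r V E X} \<subseteq> card ` Pow V"
    by (auto simp: homogeneous_def)
  hence "finite {card X | X. homogeneous r V E X}"
    using assms(1) finite_subset by blast
  moreover have "homogeneous r V E {}" unfolding homogeneous_def by auto
  ultimately show ?thesis unfolding hom_number_def using assms(2)
    by (intro Max.boundedI) auto
qed

lemma clique_bound:
  assumes X: "X \<subseteq> {0..<n}" and cl: "\<forall>S. S\<subseteq>X \<and> card S = 3 \<longrightarrow> S \<in> Econ n"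
  shows "card X \<le> bnd n"
proof -
  let ?C = "(\<lambda>x. x mod 6) ` X"
  have C6: "?C \<subseteq> {..<6}" by auto
  have finC: "finite ?C" using finite_subset[OF C6] by auto
  have tE: "t6 (x mod 6) (y mod 6) (z mod 6)" if "x\<in>X" "y\<in>X" "z\<in>X"
     "x mod 6 \<noteq> y mod 6" "x mod 6 \<noteq> z mod 6" "y mod 6 \<noteq> z mod 6" for x y z
  proof -
    have d: "x\<noteq>y" "x\<noteq>z" "y\<noteq>z" using that by auto
    have "{x,y,z} \<in> Econ n" using cl that d by auto
    moreover have "x<n" "y<n" "z<n" using X that by auto
    ultimately have "ok3 (x mod 6) (y mod 6) (z mod 6)" using memE[of x n y z] d by auto
    thus ?thesis using that unfolding ok3_def by auto
  qed
  have cC: "card ?C \<le> 3"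
  proof (rule ccontr)
    assume "\<not> card ?C \<le> 3"
    then obtain D where D: "D \<subseteq> ?C" "card D = 4" using obtain_subset_with_card_n[of 4 ?C] by auto
    then obtain p q r s where pq: "D = {p,q,r,s}" "p\<noteq>q" "p\<noteq>r" "p\<noteq>s" "q\<noteq>r" "q\<noteq>s" "r\<noteq>s"
      using card4E by blast
    obtain xp xq xr xs where xs: "xp\<in>X" "xq\<in>X" "xr\<in>X" "xs\<in>X" "xp mod 6 = p" "xq mod 6 = q" "xr mod 6 = r" "xs mod 6 = s"
      using D(1) pq(1) by (auto simp: image_iff)
    have "t6 p q r" "t6 p q s" "t6 p r s" "t6 q r s"
      using tE[of xp xq xr] tE[of xp xq xs] tE[of xp xr xs] tE[of xq xr xs] xs pq by auto
    moreover have "p<6" "q<6" "r<6" "s<6" using xs by auto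
    ultimately show False using FB pq by blast
  qed
  define k where "k = card {j\<in>?C. j < n mod 6}"
  have kC: "k \<le> card ?C" unfolding k_def using finC by (intro card_mono) auto
  have kr: "k \<le> n mod 6" unfolding k_def using card_mono[of "{..<n mod 6}" "{j\<in>?C. j < n mod 6}"] by auto
  have k3: "k \<le> 2" if c3: "card ?C = 3" and r3: "n mod 6 = 3"
  proof (rule ccontr)
    assume "\<not> k \<le> 2"
    hence "k = 3" using kC that by simp
    hence "{j\<in>?C. j < 3} = ?C" using that finC unfolding k_def by (intro card_subset_eq) auto
    hence all3: "\<forall>j\<in>?C. j < 3" by auto
    obtain p q r where pqr: "?C = {p,q,r}" "p\<noteq>q" "q\<noteq>r" "p\<noteq>r" using c3 unfolding card_3_iff by blast
    have m: "p \<in> ?C" "q \<in> ?C" "r \<in> ?C" using pqr(1) by auto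
    obtain xp where xp: "xp\<in>X" "xp mod 6 = p" using m(1) by blast
    obtain xq where xq: "xq\<in>X" "xq mod 6 = q" using m(2) by blast
    obtain xr where xr: "xr\<in>X" "xr mod 6 = r" using m(3) by blast
    note xs = xp(1) xq(1) xr(1) xp(2) xq(2) xr(2)
    have "t6 p q r" using tE[of xp xq xr] xs pqr by auto
    moreover have "p<3" "q<3" "r<3" using all3 pqr by auto
    ultimately show False using no012 pqr by blast
  qed
  have "X \<subseteq> (\<Union>j\<in>?C. {x. x < n \<and> x mod 6 = j})"
  proof
    fix x assume "x \<in> X"
    hence "x < n" "x mod 6 \<in> ?C" using X by auto
    thus "x \<in> (\<Union>j\<in>?C. {x. x < n \<and> x mod 6 = j})" by blast
  qed
  moreover have "finite (\<Union>j\<in>?C. {x. x < n \<and> x mod 6 = j})"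
    by (rule finite_subset[of _ "{..<n}"]) auto
  ultimately have "card X \<le> card (\<Union>j\<in>?C. {x. x < n \<and> x mod 6 = j})" by (intro card_mono)
  also have "\<dots> \<le> (\<Sum>j\<in>?C. card {x. x < n \<and> x mod 6 = j})" by (rule card_UN_le[OF finC])
  also have "\<dots> = (\<Sum>j\<in>?C. n div 6 + of_bool (j < n mod 6))" using C6 by (intro sum.cong refl classcard) auto
  also have "\<dots> = card ?C * (n div 6) + k" unfolding k_def using finC by (simp add: sum.distrib Int_def conj_commute)
  finally have cX: "card X \<le> card ?C * (n div 6) + k" .
  show ?thesis by (rule arithB[OF cX cC kC kr]) (use k3 in blast)
qed

lemma Econ_hom: assumes "n \<ge> 4" shows "hom_number 3 {0..<n} (Econ n) = bnd n"
proof (rule antisym)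
  have fr: "\<forall>M. M \<subseteq> {0..<n} \<and> card M = 4 \<longrightarrow> card {S\<in>Econ n. S\<subseteq>M} \<notin> {0,1,3}"
    using Econ_free[of n] unfolding Qfree_iff .
  show "hom_number 3 {0..<n} (Econ n) \<le> bnd n"
  proof (rule hom_le)
    fix X assume h: "homogeneous 3 {0..<n} (Econ n) X"
    hence XV: "X \<subseteq> {0..<n}" unfolding homogeneous_def by auto
    have "bnd n \<ge> 3" using assms unfolding bnd_def by auto
    moreover have "(\<forall>S. S \<subseteq> X \<and> card S = 3 \<longrightarrow> S \<in> Econ n) \<or> (\<forall>S. S \<subseteq> X \<and> card S = 3 \<longrightarrow> S \<notin> Econ n)"
      using h unfolding homogeneous_def by auto
    ultimately show "card X \<le> bnd n"
      using clique_bound[OF XV] cocl[OF fr _ XV] finite_subset[OF XV] by (auto simp: Econ_def)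
  qed auto
  interpret qf "{0..<n}" "Econ n" 0
    using fr Econ_uniform[of n] assms by unfold_locales (auto simp: uniform_hypergraph_def)
  show "bnd n \<le> hom_number 3 {0..<n} (Econ n)" using lower assms by simp
qed


lemma ceil_eq: "nat \<lceil>(real n + 1) / 2\<rceil> = n div 2 + 1"
proof -
  have e: "real n = 2 * real (n div 2) + real (n mod 2)"
    by (metis div_mult_mod_eq of_nat_add of_nat_mult of_nat_numeral mult.commute)
  have m: "n mod 2 \<le> 1" by simp
  hence m': "real (n mod 2) \<le> 1" by simp
  have "\<lceil>(real n + 1) / 2\<rceil> = int (n div 2) + 1"
    by (rule ceiling_unique) (use e m' in \<open>simp_all add: field_simps\<close>)
  thus ?thesis by simp
qed

theorem mainTheorem11:
  fixes n :: nat
  assumes "n \<ge> 4"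
  shows "h_rnQ 3 n {(4,0),(4,1),(4,3)} =
           (if n mod 6 = 0 then n div 2 else nat \<lceil>(real n + 1) / 2\<rceil>)"
proof -
  let ?Q = "{(4::nat,0::nat),(4,1),(4,3)}"
  have rhs: "(if n mod 6 = 0 then n div 2 else nat \<lceil>(real n + 1) / 2\<rceil>) = bnd n"
    unfolding bnd_def ceil_eq by simp
  let ?S = "{hom_number 3 {0..<n} E | E. uniform_hypergraph 3 {0..<n} E \<and> Q_free {0..<n} E ?Q}"
  have low: "bnd n \<le> y" if ys: "y \<in> ?S" for y
  proof -
    obtain E where E: "y = hom_number 3 {0..<n} E" "uniform_hypergraph 3 {0..<n} E" "Q_free {0..<n} E ?Q"
      using ys by blast
    interpret qf "{0..<n}" E 0
      using E(2,3) assms unfolding Qfree_iff by unfold_locales (auto simp: uniform_hypergraph_def)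
    show ?thesis using lower assms E(1) by simp
  qed
  have mem: "bnd n \<in> ?S" using Econ_hom[OF assms] Econ_uniform[of n] Econ_free[of n] by force
  have "?S \<subseteq> (\<lambda>E. hom_number 3 {0..<n} E) ` Pow (Pow {0..<n})"
    by (auto simp: uniform_hypergraph_def)
  hence fin: "finite ?S" by (rule finite_subset) auto
  show ?thesis unfolding h_rnQ_def rhs by (rule Min_eqI[OF fin low mem])
qed


end
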